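(* Let $S=(x_1,x_2,\dots,x_N)$ be a finite sequence of real numbers. For each term $x_j$ let $i(x_j)$ be the length of the longest strictly increasing subsequence of $S$ containing the term $x_j$, and let $d(x_j)$ be the length of the longest non-increasing subsequence of $S$ containing the term $x_j$ (if the terms are pairwise distinct, this is the longest decreasing subsequence containing $x_j$). Then \[ \sum_{j=1}^N\frac{1}{i(x_j)\,d(x_j)}\le 1. \]
   Context: Subsequences are taken by positions: a subsequence is $(x_{j_1},\dots,x_{j_m})$ with $j_1<\dots<j_m$, and it contains the term $x_j$ if $j\in\{j_1,\dots,j_m\}$. *)

theory Defs
  imports "HOL-Analysis.Analysis"
begin

text \<open>A subsequence of (x_0,...,x_{N-1}) is given by its set of positions J \<subseteq> {..<N};
  its terms are read in increasing order of position.\<close>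

definition strict_inc_subseq :: "(nat \<Rightarrow> real) \<Rightarrow> nat \<Rightarrow> nat set \<Rightarrow> bool" where
  "strict_inc_subseq x N J \<longleftrightarrow> J \<subseteq> {..<N} \<and> (\<forall>j\<in>J. \<forall>k\<in>J. j < k \<longrightarrow> x j < x k)"

definition nonincr_subseq :: "(nat \<Rightarrow> real) \<Rightarrow> nat \<Rightarrow> nat set \<Rightarrow> bool" where
  "nonincr_subseq x N J \<longleftrightarrow> J \<subseteq> {..<N} \<and> (\<forall>j\<in>J. \<forall>k\<in>J. j < k \<longrightarrow> x j \<ge> x k)"

definition inc_len :: "(nat \<Rightarrow> real) \<Rightarrow> nat \<Rightarrow> nat \<Rightarrow> nat" where
  "inc_len x N j = Max {card J | J. strict_inc_subseq x N J \<and> j \<in> J}"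

definition dec_len :: "(nat \<Rightarrow> real) \<Rightarrow> nat \<Rightarrow> nat \<Rightarrow> nat" where
  "dec_len x N j = Max {card J | J. nonincr_subseq x N J \<and> j \<in> J}"

end

theory Submission
  imports Defs
begin

lemma inc_len_ge:
  assumes "strict_inc_subseq x N J" "j \<in> J"
  shows "card J \<le> inc_len x N j"
proof -
  have "{card J | J. strict_inc_subseq x N J \<and> j \<in> J} \<subseteq> card ` Pow {..<N}"
    by (auto simp: strict_inc_subseq_def)
  hence "finite {card J | J. strict_inc_subseq x N J \<and> j \<in> J}"
    by (rule finite_subset) auto
  thus ?thesis unfolding inc_len_def using assms by (intro Max_ge) auto
qed

lemma dec_len_ge:
  assumes "nonincr_subseq x N J" "j \<in> J"
  shows "card J \<le> dec_len x N j"
proof -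
  have "{card J | J. nonincr_subseq x N J \<and> j \<in> J} \<subseteq> card ` Pow {..<N}"
    by (auto simp: nonincr_subseq_def)
  hence "finite {card J | J. nonincr_subseq x N J \<and> j \<in> J}"
    by (rule finite_subset) auto
  thus ?thesis unfolding dec_len_def using assms by (intro Max_ge) auto
qed

lemma inc_len_pos: "j < N \<Longrightarrow> 1 \<le> inc_len x N j"
  using inc_len_ge[of x N "{j}" j] by (simp add: strict_inc_subseq_def)

lemma dec_len_pos: "j < N \<Longrightarrow> 1 \<le> dec_len x N j"
  using dec_len_ge[of x N "{j}" j] by (simp add: nonincr_subseq_def)

lemma inc_len_le: "j < N \<Longrightarrow> inc_len x N j \<le> N"
proof -
  assume "j < N"
  have ne: "{card J | J. strict_inc_subseq x N J \<and> j \<in> J} \<noteq> {}"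
    using \<open>j<N\<close> by (auto simp: strict_inc_subseq_def intro!: exI[of _ "{j}"])
  have "{card J | J. strict_inc_subseq x N J \<and> j \<in> J} \<subseteq> card ` Pow {..<N}"
    by (auto simp: strict_inc_subseq_def)
  hence fin: "finite {card J | J. strict_inc_subseq x N J \<and> j \<in> J}"
    by (rule finite_subset) auto
  have "\<forall>c\<in>{card J | J. strict_inc_subseq x N J \<and> j \<in> J}. c \<le> N"
    by (auto simp: strict_inc_subseq_def intro: card_mono[of "{..<N}", simplified])
  thus ?thesis unfolding inc_len_def using fin ne by simp
qed

theorem corollary11:
  fixes x :: "nat \<Rightarrow> real" and N :: nat
  shows "(\<Sum>j<N. 1 / (real (inc_len x N j) * real (dec_len x N j))) \<le> 1"
proof -
  define M :: nat where "M = fact N"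
  define Y where "Y v = M div inc_len x N v" for v
  define S where "S v = {C. strict_inc_subseq x N C \<and> (\<forall>c\<in>C. c < v \<and> x c < x v)}" for v
  define a where "a v = Max (sum Y ` S v)" for v
  have Mpos: "M > 0" unfolding M_def by simp
  have finS: "finite (S v)" for v
    by (rule finite_subset[of _ "Pow {..<N}"]) (auto simp: S_def strict_inc_subseq_def)
  have neS: "{} \<in> S v" for v by (simp add: S_def strict_inc_subseq_def)
  have a_ge: "C \<in> S v \<Longrightarrow> sum Y C \<le> a v" for C v
    unfolding a_def using finS by (intro Max_ge) auto
  have a_in: "\<exists>C\<in>S v. a v = sum Y C" for v
  proof -
    have "a v \<in> sum Y ` S v" unfolding a_def using finS neS by (intro Max_in) auto
    thus ?thesis by auto
  qed
  have dvdM: "v < N \<Longrightarrow> inc_len x N v dvd M" for v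
    unfolding M_def using inc_len_pos[of v N x] inc_len_le[of v N x] by (intro dvd_fact) auto
  have YM: "v < N \<Longrightarrow> Y v * inc_len x N v = M" for v
    using dvdM[of v] by (simp add: Y_def)
  have step: "u < v \<Longrightarrow> v < N \<Longrightarrow> x u < x v \<Longrightarrow> a u + Y u \<le> a v" for u v
  proof -
    assume uv: "u < v" "v < N" "x u < x v"
    obtain C where C: "C \<in> S u" "a u = sum Y C" using a_in by blast
    have uC: "u \<notin> C" using C(1) by (auto simp: S_def)
    have C1: "C \<subseteq> {..<N}" "\<And>j k. j \<in> C \<Longrightarrow> k \<in> C \<Longrightarrow> j < k \<Longrightarrow> x j < x k"
      "\<And>c. c \<in> C \<Longrightarrow> c < u \<and> x c < x u"
      using C(1) by (auto simp: S_def strict_inc_subseq_def)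
    have "insert u C \<in> S v"
      unfolding S_def strict_inc_subseq_def mem_Collect_eq
    proof (intro conjI ballI impI)
      show "insert u C \<subseteq> {..<N}" using C1(1) uv by auto
    next
      fix j k assume "j \<in> insert u C" "k \<in> insert u C" "j < k"
      thus "x j < x k" using C1 by (metis insert_iff less_asym)
    next
      fix c assume "c \<in> insert u C"
      thus "c < v" using C1(3) uv by (metis insert_iff less_trans)
    next
      fix c assume "c \<in> insert u C"
      thus "x c < x v" using C1(3) uv by (metis insert_iff less_trans)
    qed
    hence "sum Y (insert u C) \<le> a v" by (rule a_ge)
    moreover have "sum Y (insert u C) = Y u + sum Y C"
      using uC finS C(1) by (subst sum.insert) (auto intro: finite_subset[OF _ finS] simp: S_def strict_inc_subseq_def finite_subset[of C "{..<N}"])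
    ultimately show ?thesis using C by simp
  qed
  have top: "v < N \<Longrightarrow> a v + Y v \<le> M" for v
  proof -
    assume v: "v < N"
    obtain C where C: "C \<in> S v" "a v = sum Y C" using a_in by blast
    define D where "D = insert v C"
    have vC: "v \<notin> C" using C(1) by (auto simp: S_def)
    have C1: "C \<subseteq> {..<N}" "\<And>j k. j \<in> C \<Longrightarrow> k \<in> C \<Longrightarrow> j < k \<Longrightarrow> x j < x k"
      "\<And>c. c \<in> C \<Longrightarrow> c < v \<and> x c < x v"
      using C(1) by (auto simp: S_def strict_inc_subseq_def)
    have Dch: "strict_inc_subseq x N D"
      unfolding strict_inc_subseq_def D_def
    proof (intro conjI ballI impI)
      show "insert v C \<subseteq> {..<N}" using C1(1) v by auto
    next
      fix j k assume "j \<in> insert v C" "k \<in> insert v C" "j < k"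
      thus "x j < x k" using C1 by (metis insert_iff less_asym)
    qed
    have finD: "finite D" using Dch by (auto simp: strict_inc_subseq_def intro: finite_subset)
    have Dsum: "sum Y D = a v + Y v"
      using vC C finD by (simp add: D_def add.commute)
    have "D \<noteq> {}" by (simp add: D_def)
    hence cpos: "card D > 0" using finD by auto
    have "\<forall>c\<in>D. Y c * card D \<le> M"
    proof
      fix c assume c: "c \<in> D"
      have cN: "c < N" using Dch c by (auto simp: strict_inc_subseq_def)
      have "Y c * card D \<le> Y c * inc_len x N c"
        using inc_len_ge[OF Dch c] by simp
      thus "Y c * card D \<le> M" using YM[OF cN] by simp
    qed
    hence "sum Y D * card D \<le> card D * M"
      using sum_mono[of D "\<lambda>c. Y c * card D" "\<lambda>_. M"] by (simp add: sum_distrib_right)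
    hence "sum Y D \<le> M" using cpos by (simp add: mult.commute)
    thus ?thesis using Dsum by simp
  qed
  define I where "I v = {a v..<a v + Y v}" for v
  define A where "A t = {v. v < N \<and> t \<in> I v}" for t
  define d where "d v = real (dec_len x N v)" for v
  have Aanti: "nonincr_subseq x N (A t)" for t
    unfolding nonincr_subseq_def
  proof safe
    fix j assume "j \<in> A t" thus "j < N" by (simp add: A_def)
  next
    fix j k assume jk: "j \<in> A t" "k \<in> A t" "j < k"
    show "x k \<le> x j"
    proof (rule ccontr)
      assume "\<not> x k \<le> x j"
      hence "a j + Y j \<le> a k" using step[of j k] jk by (auto simp: A_def)
      thus False using jk by (auto simp: A_def I_def)
    qed
  qed
  have Abound: "(\<Sum>v\<in>A t. 1 / d v) \<le> 1" for t
  proof (cases "A t = {}")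
    case True thus ?thesis by simp
  next
    case False
    have finA: "finite (A t)" by (simp add: A_def)
    have "(\<Sum>v\<in>A t. 1 / d v) \<le> (\<Sum>v\<in>A t. 1 / real (card (A t)))"
    proof (rule sum_mono)
      fix v assume v: "v \<in> A t"
      have "card (A t) \<le> dec_len x N v" by (rule dec_len_ge[OF Aanti v])
      moreover have "card (A t) > 0" using False finA by auto
      ultimately show "1 / d v \<le> 1 / real (card (A t))"
        unfolding d_def by (intro divide_left_mono) auto
    qed
    also have "\<dots> = 1" using False finA by simp
    finally show ?thesis .
  qed
  have eq1: "real (Y v) / d v = (\<Sum>t<M. if t \<in> I v then 1 / d v else 0)" if v: "v < N" for v
  proof -
    have "(\<Sum>t<M. if t \<in> I v then 1 / d v else 0) = (\<Sum>t\<in>{..<M} \<inter> I v. 1 / d v)"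
      by (rule sum.inter_restrict[symmetric]) simp
    also have "{..<M} \<inter> I v = I v" using top[OF v] by (auto simp: I_def)
    also have "(\<Sum>t\<in>I v. 1 / d v) = real (Y v) / d v" by (simp add: I_def)
    finally show ?thesis by simp
  qed
  have eq2: "(\<Sum>v<N. if t \<in> I v then 1 / d v else 0) = (\<Sum>v\<in>A t. 1 / d v)" for t
  proof -
    have "(\<Sum>v<N. if t \<in> I v then 1 / d v else 0) = (\<Sum>v\<in>{..<N} \<inter> {v. t \<in> I v}. 1 / d v)"
      by (subst sum.inter_restrict) auto
    also have "{..<N} \<inter> {v. t \<in> I v} = A t" by (auto simp: A_def)
    finally show ?thesis .
  qed
  have "(\<Sum>v<N. real (Y v) / d v) = (\<Sum>v<N. \<Sum>t<M. if t \<in> I v then 1 / d v else 0)"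
    using eq1 by simp
  also have "\<dots> = (\<Sum>t<M. \<Sum>v<N. if t \<in> I v then 1 / d v else 0)" by (rule sum.swap)
  also have "\<dots> = (\<Sum>t<M. \<Sum>v\<in>A t. 1 / d v)" using eq2 by simp
  also have "\<dots> \<le> (\<Sum>t<M. 1)" by (rule sum_mono) (rule Abound)
  also have "\<dots> = real M" by simp
  finally have main: "(\<Sum>v<N. real (Y v) / d v) \<le> real M" .
  have "(\<Sum>j<N. 1 / (real (inc_len x N j) * real (dec_len x N j)))
      = (\<Sum>v<N. real (Y v) / d v) / real M"
    unfolding sum_divide_distrib
  proof (rule sum.cong[OF refl])
    fix v assume "v \<in> {..<N}"
    hence v: "v < N" by simp
    have "real (Y v) * real (inc_len x N v) = real M" using YM[OF v] by (metis of_nat_mult)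
    moreover have "real (inc_len x N v) > 0" using inc_len_pos[OF v, of x] by simp
    ultimately have "real (Y v) = real M / real (inc_len x N v)" by (simp add: field_simps)
    thus "1 / (real (inc_len x N v) * real (dec_len x N v)) = real (Y v) / d v / real M"
      using Mpos by (simp add: d_def field_simps)
  qed
  also have "\<dots> \<le> 1" using main Mpos by simp
  finally show ?thesis .
qed

end
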